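(* In the infinite-sites model described in the context, for every generation $\tau\ge 0$ the expected phenotypic mean and expected phenotypic variance satisfy \[ \bar G(\tau)=\Theta\int_0^\infty \alpha f(\alpha)\int_0^\tau\bigl(1-P_{\mathrm{lost}}([t],e^{s\alpha})\bigr)\,\gamma_1\bigl(a(t,e^{s\alpha},N)\bigr)\,dt\,d\alpha \] and \[ V_G(\tau)=\Theta\int_0^\infty \alpha^2 f(\alpha)\int_0^\tau\bigl(1-P_{\mathrm{lost}}([t],e^{s\alpha})\bigr)\,\gamma\bigl(a(t,e^{s\alpha},N)\bigr)\,dt\,d\alpha . \] In particular, $\Theta$ enters both quantities only as a multiplicative factor.
   Context: A haploid population of size $N$ starts monomorphic at generation $\tau=0$. For $\tau>0$, mutations occur at new sites (infinite sites) according to a Poisson process with rate $\Theta>0$ per generation, so the number of mutations in $(0,\tau]$ is Poisson with mean $\Theta\tau$; write $\mathrm{Poi}_{\Theta\tau}(n)=e^{-\Theta\tau}(\Theta\tau)^n/n!$. Each mutation has trait effect $\alpha>0$ drawn independently from a probability density $f$ on $(0,\infty)$ with finite moments, and fitness $\sigma=e^{s\alpha}$ with $s>0$. Sites are in linkage equilibrium (frequencies at different sites independent). For $\sigma>1$, consider a Galton–Watson process started from one individual with offspring mean $\sigma$; $P_{\mathrm{lost}}(n,\sigma)$ is the probability it is extinct by generation $n$ ($P_{\mathrm{lost}}(0,\sigma)=0$). $[t]$ is the integer part of $t$. $E_1(a)=\int_a^\infty x^{-1}e^{-x}dx$. For $a>0$, $g_a(x)=a(1-x)^{-2}\exp(-ax/(1-x))$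 on $[0,1)$, with $\gamma_1(a)=\int_0^1 x g_a(x)dx=1-ae^aE_1(a)$ and $\gamma(a)=\int_0^1x(1-x)g_a(x)dx=a(1+a)e^aE_1(a)-a$. Set $a(t,\sigma,N)=N(1-P_{\mathrm{lost}}([t],\sigma))\sigma^{-t}$. Given $n$ mutations in $(0,\tau]$ (arrival times distributed as a Poisson process conditioned on $n$ events), the $i$-th mutation, with effect $\alpha_i$ and arrival time $\tau_i$, has frequency $\tilde X^{(i)}_{\tau,e^{s\alpha_i},\Theta}$ in generation $\tau$, a random variable equal to $0$ with probability $P_{\mathrm{lost}}([\tau-\tau_i],e^{s\alpha_i})$ and otherwise having density $g_{a(\tau-\tau_i,e^{s\alpha_i},N)}$. The expected phenotypic mean and variance are defined by $\bar G(\tau)=\sum_{n\ge1}\mathrm{Poi}_{\Theta\tau}(n)\sum_{i=1}^n\int_0^\infty\alpha_i\,\mathbb E[\tilde X^{(i)}_{\tau,e^{s\alpha_i},\Theta}]f(\alpha_i)d\alpha_i$ and $V_G(\tau)=\sum_{n\ge1}\mathrm{Poi}_{\Theta\tau}(n)\sum_{i=1}^n\int_0^\infty\alpha_i^2\,\mathbb E[\tilde X^{(i)}_{\tau,e^{s\alpha_i},\Theta}(1-\tilde X^{(i)}_{\tau,e^{s\alpha_i},\Theta})]f(\alpha_i)d\alpha_i$. *)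

theory Defs
  imports "HOL-Probability.Probability"
begin

definition Poi :: "real \<Rightarrow> nat \<Rightarrow> real" where
  "Poi m n = exp (- m) * m ^ n / fact n"

text \<open>Galton--Watson process with offspring law  off sigma  (a pmf on nat with mean sigma),
  started from one individual: probability of extinction by generation n, by first-step
  analysis:  P(0) = 0,  P(n+1) = sum_k p_k P(n)^k.\<close>
fun P_lost :: "(real \<Rightarrow> nat pmf) \<Rightarrow> nat \<Rightarrow> real \<Rightarrow> real" where
  "P_lost off 0 \<sigma> = 0"
| "P_lost off (Suc n) \<sigma> = (\<Sum>k. pmf (off \<sigma>) k * (P_lost off n \<sigma>) ^ k)"

definition E1 :: "real \<Rightarrow> real" where
  "E1 a = (LINT x:{a<..}|lborel. exp (- x) / x)"

definition g_dens :: "real \<Rightarrow> real \<Rightarrow> real" where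
  "g_dens a x = a / (1 - x)^2 * exp (- a * x / (1 - x))"

definition gamma1 :: "real \<Rightarrow> real" where
  "gamma1 a = 1 - a * exp a * E1 a"

definition gammaV :: "real \<Rightarrow> real" where
  "gammaV a = a * (1 + a) * exp a * E1 a - a"

definition a_par :: "(real \<Rightarrow> nat pmf) \<Rightarrow> real \<Rightarrow> real \<Rightarrow> real \<Rightarrow> real" where
  "a_par off t \<sigma> N = N * (1 - P_lost off (nat \<lfloor>t\<rfloor>) \<sigma>) * \<sigma> powr (- t)"

text \<open>Frequency of a mutation with fitness sigma that arose t generations ago:
  0 with probability P_lost([t],sigma), otherwise density g_{a(t,sigma,N)} on [0,1).
  Expectations E[X] and E[X(1-X)] of this random variable.\<close>
definition ExpX :: "(real \<Rightarrow> nat pmf) \<Rightarrow> real \<Rightarrow> real \<Rightarrow> real \<Rightarrow> real" where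
  "ExpX off t \<sigma> N = P_lost off (nat \<lfloor>t\<rfloor>) \<sigma> * 0
     + (1 - P_lost off (nat \<lfloor>t\<rfloor>) \<sigma>) * (LINT x:{0..<1}|lborel. x * g_dens (a_par off t \<sigma> N) x)"

definition ExpXX :: "(real \<Rightarrow> nat pmf) \<Rightarrow> real \<Rightarrow> real \<Rightarrow> real \<Rightarrow> real" where
  "ExpXX off t \<sigma> N = P_lost off (nat \<lfloor>t\<rfloor>) \<sigma> * 0
     + (1 - P_lost off (nat \<lfloor>t\<rfloor>) \<sigma>) * (LINT x:{0..<1}|lborel. x * (1 - x) * g_dens (a_par off t \<sigma> N) x)"

text \<open>Expected phenotypic mean and variance.  Given n mutations in (0,tau], the arrival
  time tau_i of the i-th (randomly labelled) mutation is uniform on (0,tau].\<close>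
definition Gbar :: "(real \<Rightarrow> nat pmf) \<Rightarrow> (real \<Rightarrow> real) \<Rightarrow> real \<Rightarrow> real \<Rightarrow> real \<Rightarrow> real \<Rightarrow> real" where
  "Gbar off f s N \<Theta> \<tau> = (\<Sum>n. Poi (\<Theta> * \<tau>) n * (\<Sum>i\<in>{1..n}.
      (LINT \<alpha>:{0<..}|lborel. \<alpha> *
         (\<integral>u. ExpX off (\<tau> - u) (exp (s * \<alpha>)) N \<partial>(uniform_measure lborel {0<..\<tau>})) * f \<alpha>)))"

definition VG :: "(real \<Rightarrow> nat pmf) \<Rightarrow> (real \<Rightarrow> real) \<Rightarrow> real \<Rightarrow> real \<Rightarrow> real \<Rightarrow> real \<Rightarrow> real" where
  "VG off f s N \<Theta> \<tau> = (\<Sum>n. Poi (\<Theta> * \<tau>) n * (\<Sum>i\<in>{1..n}.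
      (LINT \<alpha>:{0<..}|lborel. \<alpha>^2 *
         (\<integral>u. ExpXX off (\<tau> - u) (exp (s * \<alpha>)) N \<partial>(uniform_measure lborel {0<..\<tau>})) * f \<alpha>)))"

end

theory Submission
  imports Defs
begin


lemma pmf_partial_le1: "(\<Sum>k<n. pmf (p::nat pmf) k) \<le> 1"
proof -
  have "(\<Sum>k<n. pmf p k) = measure (measure_pmf p) {..<n}"
    by (simp add: measure_measure_pmf_finite)
  also have "\<dots> \<le> 1" by simp
  finally show ?thesis .
qed

lemma pmf_summable: "summable (\<lambda>k. pmf (p::nat pmf) k)"
  by (rule summableI_nonneg_bounded[where x=1]) (auto intro: pmf_partial_le1)

lemma P_lost_bounds: "0 \<le> P_lost off n \<sigma> \<and> P_lost off n \<sigma> \<le> 1"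
proof (induction n)
  case 0
  then show ?case by simp
next
  case (Suc n)
  define q where "q = P_lost off n \<sigma>"
  have q: "0 \<le> q" "q \<le> 1" using Suc q_def by auto
  have le: "pmf (off \<sigma>) k * q ^ k \<le> pmf (off \<sigma>) k" for k
    using q by (simp add: mult_left_le power_le_one)
  have nn: "0 \<le> pmf (off \<sigma>) k * q ^ k" for k using q by simp
  have sm: "summable (\<lambda>k. pmf (off \<sigma>) k * q ^ k)"
    by (rule summable_comparison_test[OF _ pmf_summable]) (use le nn in auto)
  have "(\<Sum>k. pmf (off \<sigma>) k * q ^ k) \<le> (\<Sum>k. pmf (off \<sigma>) k)"
    by (rule suminf_le[OF le sm pmf_summable])
  also have "\<dots> \<le> 1"
    by (rule suminf_le_const[OF pmf_summable]) (rule pmf_partial_le1)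
  finally have "(\<Sum>k. pmf (off \<sigma>) k * q ^ k) \<le> 1" .
  moreover have "0 \<le> (\<Sum>k. pmf (off \<sigma>) k * q ^ k)" by (rule suminf_nonneg[OF sm nn])
  ultimately show ?case by (simp add: q_def)
qed

lemma exp_int:
  fixes a :: real
  assumes "a > 0"
  shows "set_integrable lborel {a<..} (\<lambda>z. exp (-z))" "(LINT z:{a<..}|lborel. exp (-z)) = exp (-a)"
proof -
  have *: "((\<lambda>t::real. exp (- t)) \<longlongrightarrow> 0) at_top"
    using exp_at_bot[THEN filterlim_compose, OF filterlim_uminus_at_bot_at_top] by simp
  have A: "(((\<lambda>z. - exp (-z)) \<circ> real_of_ereal) \<longlongrightarrow> (- exp (-a))) (at_right (ereal a))"
    unfolding ereal_tendsto_simps by (auto intro!: tendsto_eq_intros)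
  have B: "(((\<lambda>z. - exp (-z)) \<circ> real_of_ereal) \<longlongrightarrow> 0) (at_left \<infinity>)"
    unfolding ereal_tendsto_simps using tendsto_minus[OF *] by simp
  note r = interval_integral_FTC_nonneg[where F="\<lambda>z. - exp (-z)" and f="\<lambda>z. exp (-z)" and a="ereal a" and b=\<infinity>, OF _ _ _ _ A B]
  have D: "DERIV (\<lambda>z. - exp (-z)) x :> exp (-x)" for x
    by (auto intro!: derivative_eq_intros)
  show "set_integrable lborel {a<..} (\<lambda>z. exp (-z))"
    using r(1) D by auto
  show "(LINT z:{a<..}|lborel. exp (-z)) = exp (-a)"
    using r(2) D by (auto simp: interval_lebesgue_integral_def)
qed

lemma Q_int:
  fixes a :: real
  assumes "a > 0"
  shows "set_integrable lborel {a<..} (\<lambda>z. exp (-z) / z^2 + exp (-z) / z)"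
        "(LINT z:{a<..}|lborel. exp (-z) / z^2 + exp (-z) / z) = exp (-a) / a"
proof -
  have *: "((\<lambda>t::real. exp (- t) / t) \<longlongrightarrow> 0) at_top"
    using tendsto_mult[OF exp_at_bot[THEN filterlim_compose, OF filterlim_uminus_at_bot_at_top] tendsto_inverse_0_at_top[OF filterlim_ident]] by (simp add: divide_inverse)
  have A: "(((\<lambda>z. - (exp (-z) / z)) \<circ> real_of_ereal) \<longlongrightarrow> (- (exp (-a) / a))) (at_right (ereal a))"
    unfolding ereal_tendsto_simps using assms by (auto intro!: tendsto_eq_intros)
  have B: "(((\<lambda>z. - (exp (-z) / z)) \<circ> real_of_ereal) \<longlongrightarrow> 0) (at_left \<infinity>)"
    unfolding ereal_tendsto_simps using tendsto_minus[OF *] by simp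
  have D: "DERIV (\<lambda>z. - (exp (-z) / z)) x :> exp (-x) / x^2 + exp (-x) / x" if "x > a" for x
    using that assms by (auto intro!: derivative_eq_intros simp: field_simps power2_eq_square)
  note r = interval_integral_FTC_nonneg[where F="\<lambda>z. - (exp (-z) / z)" and f="\<lambda>z. exp (-z) / z^2 + exp (-z) / z" and a="ereal a" and b=\<infinity>, OF _ _ _ _ A B]
  show "set_integrable lborel {a<..} (\<lambda>z. exp (-z) / z^2 + exp (-z) / z)"
    using r(1) D assms by (auto intro!: continuous_intros)
  show "(LINT z:{a<..}|lborel. exp (-z) / z^2 + exp (-z) / z) = exp (-a) / a"
    using r(2) D assms by (auto intro!: continuous_intros simp: interval_lebesgue_integral_def)
qed

lemma E1_int:
  fixes a :: real
  assumes "a > 0"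
  shows "set_integrable lborel {a<..} (\<lambda>z. exp (-z) / z)"
        "set_integrable lborel {a<..} (\<lambda>z. exp (-z) / z^2)"
        "(LINT z:{a<..}|lborel. exp (-z) / z^2) = exp (-a) / a - E1 a"
proof -
  show 1: "set_integrable lborel {a<..} (\<lambda>z. exp (-z) / z)"
  proof (rule set_integrable_bound[OF Q_int(1)[OF assms]])
    show "set_borel_measurable lborel {a<..} (\<lambda>z. exp (- z) / z)"
      unfolding set_borel_measurable_def by measurable
    show "AE x in lborel. x \<in> {a<..} \<longrightarrow> norm (exp (- x) / x) \<le> norm (exp (- x) / x\<^sup>2 + exp (- x) / x)"
      using assms by (auto intro!: AE_I2)
  qed
  have 2: "set_integrable lborel {a<..} (\<lambda>z. (exp (-z) / z^2 + exp (-z) / z) - exp (-z) / z)"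
    by (rule set_integral_diff(1)[OF Q_int(1)[OF assms] 1])
  then show "set_integrable lborel {a<..} (\<lambda>z. exp (-z) / z^2)" by simp
  have "(LINT z:{a<..}|lborel. exp (-z) / z^2) = (LINT z:{a<..}|lborel. (exp (-z) / z^2 + exp (-z) / z) - exp (-z) / z)"
    by simp
  also have "\<dots> = exp (-a) / a - E1 a"
    by (subst set_integral_diff(2)[OF Q_int(1)[OF assms] 1]) (simp add: Q_int(2)[OF assms] E1_def)
  finally show "(LINT z:{a<..}|lborel. exp (-z) / z^2) = exp (-a) / a - E1 a" .
qed

lemma subst_g:
  fixes w :: "real \<Rightarrow> real"
  assumes a: "a > 0"
    and wc: "\<And>x. 0 < x \<Longrightarrow> x < 1 \<Longrightarrow> isCont w x"
    and wn: "\<And>x. 0 < x \<Longrightarrow> x < 1 \<Longrightarrow> 0 \<le> w x"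
    and w0: "w 0 = 0"
    and wi: "set_integrable lborel {a<..} (\<lambda>z. w (1 - a / z) * exp (a - z))"
  shows "(LINT x:{0..<1}|lborel. w x * g_dens a x) = (LINT z:{a<..}|lborel. w (1 - a / z) * exp (a - z))"
proof -
  have key: "w (1 - a / z) * g_dens a (1 - a / z) * (a / z^2) = w (1 - a / z) * exp (a - z)" if "z > a" for z
  proof -
    have z: "z > 0" using that a by simp
    have e: "- a * (1 - a / z) / (1 - (1 - a / z)) = a - z" using z a by (simp add: field_simps)
    show ?thesis unfolding g_dens_def e using z a by (simp add: field_simps power2_eq_square)
  qed
  have wi': "set_integrable lborel (einterval (ereal a) \<infinity>) (\<lambda>z. w (1 - a / z) * g_dens a (1 - a / z) * (a / z^2))"
  proof -
    have "set_integrable lborel (einterval (ereal a) \<infinity>) (\<lambda>z. w (1 - a / z) * g_dens a (1 - a / z) * (a / z^2))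
      = set_integrable lborel {a<..} (\<lambda>z. w (1 - a / z) * exp (a - z))"
    proof (rule set_integrable_cong)
      fix z assume "z \<in> einterval (ereal a) \<infinity>"
      then show "w (1 - a / z) * g_dens a (1 - a / z) * (a / z^2) = w (1 - a / z) * exp (a - z)"
        by (intro key) simp
    qed simp_all
    then show ?thesis using wi by simp
  qed
  have A: "((ereal \<circ> (\<lambda>z. 1 - a / z) \<circ> real_of_ereal) \<longlongrightarrow> 0) (at_right (ereal a))"
    unfolding zero_ereal_def ereal_tendsto_simps using a by (auto intro!: tendsto_eq_intros)
  have B: "((ereal \<circ> (\<lambda>z. 1 - a / z) \<circ> real_of_ereal) \<longlongrightarrow> 1) (at_left \<infinity>)"
    unfolding one_ereal_def ereal_tendsto_simps 
    using tendsto_diff[OF tendsto_const tendsto_divide_0[OF tendsto_const filterlim_ident[THEN filterlim_at_top_imp_at_infinity]], of 1 a]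
    by simp
  have sub: "(LBINT x=ereal 0..ereal 1. w x * g_dens a x) = (LBINT z=ereal a..\<infinity>. w (1 - a / z) * g_dens a (1 - a / z) * (a / z^2))"
  proof (rule interval_integral_substitution_nonneg(2)[where g="\<lambda>z. 1 - a / z" and g'="\<lambda>z. a / z^2" and f="\<lambda>x. w x * g_dens a x", OF _ _ _ _ _ _ A[unfolded zero_ereal_def] B[unfolded one_ereal_def] wi'])
    show "ereal a < \<infinity>" by simp
    fix z assume "ereal a < ereal z" "ereal z < \<infinity>"
    then have z: "a < z" by simp
    then have z0: "z > 0" using a by simp
    have lt: "0 < 1 - a / z" "1 - a / z < 1" using z z0 a by (auto simp: field_simps)
    show "((\<lambda>z. 1 - a / z) has_real_derivative a / z\<^sup>2) (at z)"
      using z0 by (auto intro!: derivative_eq_intros simp: field_simps power2_eq_square)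
    show "isCont (\<lambda>x. w x * g_dens a x) (1 - a / z)"
      unfolding g_dens_def using lt wc[OF lt] by (auto intro!: continuous_intros)
    show "isCont (\<lambda>z. a / z\<^sup>2) z" using z0 by (auto intro!: continuous_intros)
    show "0 \<le> w (1 - a / z) * g_dens a (1 - a / z)"
      unfolding g_dens_def using lt wn[OF lt] a by (auto intro!: mult_nonneg_nonneg divide_nonneg_nonneg)
  next
    fix z assume "ereal a \<le> ereal z" "ereal z \<le> \<infinity>"
    then show "0 \<le> a / z\<^sup>2" using a by simp
  qed
  have "(LINT x:{0..<1}|lborel. w x * g_dens a x) = (LINT x:{0<..<1}|lborel. w x * g_dens a x)"
    unfolding set_lebesgue_integral_def
    by (rule Bochner_Integration.integral_cong) (auto simp: indicator_def w0)
  also have "\<dots> = (LINT z:{a<..}|lborel. w (1 - a / z) * g_dens a (1 - a / z) * (a / z^2))"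
    using sub by (simp add: interval_lebesgue_integral_def)
  also have "\<dots> = (LINT z:{a<..}|lborel. w (1 - a / z) * exp (a - z))"
    by (rule set_lebesgue_integral_cong) (use key in auto)
  finally show ?thesis .
qed

lemma gamma1_eq:
  fixes a :: real
  assumes a: "a > 0"
  shows "(LINT x:{0..<1}|lborel. x * g_dens a x) = gamma1 a"
proof -
  have eq: "(1 - a / z) * exp (a - z) = exp a * exp (-z) - (a * exp a) * (exp (-z) / z)" if "z \<in> {a<..}" for z
    using that a by (simp add: field_simps exp_diff exp_minus)
  have i1: "set_integrable lborel {a<..} (\<lambda>z. exp a * exp (-z))"
    using exp_int(1)[OF a] by simp
  have i2: "set_integrable lborel {a<..} (\<lambda>z. (a * exp a) * (exp (-z) / z))"
    by (rule set_integrable_mult_right) (rule E1_int(1)[OF a])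
  have wi: "set_integrable lborel {a<..} (\<lambda>z. (1 - a / z) * exp (a - z))"
  proof -
    have "set_integrable lborel {a<..} (\<lambda>z. (1 - a / z) * exp (a - z)) = set_integrable lborel {a<..} (\<lambda>z. exp a * exp (-z) - (a * exp a) * (exp (-z) / z))"
    proof (rule set_integrable_cong)
      fix z assume "z \<in> {a<..}" then show "(1 - a / z) * exp (a - z) = exp a * exp (-z) - (a * exp a) * (exp (-z) / z)" by (rule eq)
    qed simp_all
    then show ?thesis using set_integral_diff(1)[OF i1 i2] by simp
  qed
  have "(LINT x:{0..<1}|lborel. x * g_dens a x) = (LINT z:{a<..}|lborel. (1 - a / z) * exp (a - z))"
    by (rule subst_g[where w="\<lambda>x. x", OF a _ _ _ wi]) auto
  also have "\<dots> = (LINT z:{a<..}|lborel. exp a * exp (-z) - (a * exp a) * (exp (-z) / z))"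
    by (rule set_lebesgue_integral_cong) (use eq in auto)
  also have "\<dots> = exp a * exp (-a) - (a * exp a) * E1 a"
    by (simp only: set_integral_diff(2)[OF i1 i2] set_integral_mult_right exp_int(2)[OF a] E1_def[symmetric])
  also have "\<dots> = gamma1 a" by (simp add: gamma1_def exp_minus field_simps)
  finally show ?thesis .
qed

lemma gammaV_eq:
  fixes a :: real
  assumes a: "a > 0"
  shows "(LINT x:{0..<1}|lborel. x * (1 - x) * g_dens a x) = gammaV a"
proof -
  have eq: "(1 - a / z) * (1 - (1 - a / z)) * exp (a - z) = (a * exp a) * (exp (-z) / z) - (a^2 * exp a) * (exp (-z) / z^2)" if "z \<in> {a<..}" for z
    using that a by (simp add: field_simps exp_diff exp_minus power2_eq_square)
  have i1: "set_integrable lborel {a<..} (\<lambda>z. (a * exp a) * (exp (-z) / z))"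
    by (rule set_integrable_mult_right) (rule E1_int(1)[OF a])
  have i2: "set_integrable lborel {a<..} (\<lambda>z. (a^2 * exp a) * (exp (-z) / z^2))"
    by (rule set_integrable_mult_right) (rule E1_int(2)[OF a])
  have wi: "set_integrable lborel {a<..} (\<lambda>z. (1 - a / z) * (1 - (1 - a / z)) * exp (a - z))"
  proof -
    have "set_integrable lborel {a<..} (\<lambda>z. (1 - a / z) * (1 - (1 - a / z)) * exp (a - z)) = set_integrable lborel {a<..} (\<lambda>z. (a * exp a) * (exp (-z) / z) - (a^2 * exp a) * (exp (-z) / z^2))"
    proof (rule set_integrable_cong)
      fix z assume "z \<in> {a<..}" then show "(1 - a / z) * (1 - (1 - a / z)) * exp (a - z) = (a * exp a) * (exp (-z) / z) - (a^2 * exp a) * (exp (-z) / z^2)" by (rule eq)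
    qed simp_all
    then show ?thesis using set_integral_diff(1)[OF i1 i2] by simp
  qed
  have "(LINT x:{0..<1}|lborel. x * (1 - x) * g_dens a x) = (LINT z:{a<..}|lborel. (1 - a / z) * (1 - (1 - a / z)) * exp (a - z))"
    by (rule subst_g[where w="\<lambda>x. x * (1 - x)", OF a _ _ _ wi]) auto
  also have "\<dots> = (LINT z:{a<..}|lborel. (a * exp a) * (exp (-z) / z) - (a^2 * exp a) * (exp (-z) / z^2))"
    by (rule set_lebesgue_integral_cong) (use eq in auto)
  also have "\<dots> = (a * exp a) * E1 a - (a^2 * exp a) * (exp (-a) / a - E1 a)"
    by (simp only: set_integral_diff(2)[OF i1 i2] set_integral_mult_right E1_int(3)[OF a] E1_def[symmetric])
  also have "\<dots> = gammaV a" using a by (simp add: gammaV_def exp_minus field_simps power2_eq_square)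
  finally show ?thesis .
qed


lemma E1_meas: "E1 \<in> borel_measurable borel"
proof -
  have m0: "(\<lambda>p::real\<times>real. if fst p < snd p then exp (- snd p) / snd p else 0) \<in> borel_measurable (borel \<Otimes>\<^sub>M lborel)"
    by measurable
  have e: "(\<lambda>(a::real, x::real). indicator {a<..} x *\<^sub>R (exp (- x) / x)) = (\<lambda>p::real\<times>real. if fst p < snd p then exp (- snd p) / snd p else 0)"
    by (auto simp: indicator_def fun_eq_iff)
  have m: "(\<lambda>(a::real, x::real). indicator {a<..} x *\<^sub>R (exp (- x) / x)) \<in> borel_measurable (borel \<Otimes>\<^sub>M lborel)"
    by (subst e) (rule m0)
  have "(\<lambda>a::real. LINT x::real|lborel. indicator {a<..} x *\<^sub>R (exp (- x) / x)) \<in> borel_measurable borel"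
    by (rule lborel.borel_measurable_lebesgue_integral) (use m in simp)
  then show ?thesis unfolding E1_def set_lebesgue_integral_def by simp
qed

lemma Pfloor_meas[measurable]: "(\<lambda>t::real. P_lost off (nat \<lfloor>t\<rfloor>) \<sigma>) \<in> borel_measurable borel"
  by (rule measurable_compose[where f="\<lambda>t. nat \<lfloor>t\<rfloor>" and N="count_space UNIV"]) auto

lemma apar_meas[measurable]: "(\<lambda>t. a_par off t \<sigma> N) \<in> borel_measurable borel"
  unfolding a_par_def
  by (intro borel_measurable_times borel_measurable_const borel_measurable_diff Pfloor_meas) (auto intro!: borel_measurable_continuous_onI continuous_intros)

lemma gamma_meas[measurable]: "gamma1 \<in> borel_measurable borel" "gammaV \<in> borel_measurable borel"
  unfolding gamma1_def[abs_def] gammaV_def[abs_def]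
  by (intro borel_measurable_times borel_measurable_const borel_measurable_diff borel_measurable_add E1_meas measurable_ident_sets refl borel_measurable_exp)+

lemma H_meas:
  "(\<lambda>t. (1 - P_lost off (nat \<lfloor>t\<rfloor>) \<sigma>) * gamma1 (a_par off t \<sigma> N)) \<in> borel_measurable borel"
  "(\<lambda>t. (1 - P_lost off (nat \<lfloor>t\<rfloor>) \<sigma>) * gammaV (a_par off t \<sigma> N)) \<in> borel_measurable borel"
  by (intro borel_measurable_times borel_measurable_const borel_measurable_diff Pfloor_meas measurable_compose[OF apar_meas] gamma_meas)+

lemma ExpX_eq:
  assumes "\<sigma> > 0" "N \<ge> 1"
  shows "ExpX off t \<sigma> N = (1 - P_lost off (nat \<lfloor>t\<rfloor>) \<sigma>) * gamma1 (a_par off t \<sigma> N)"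
    and "ExpXX off t \<sigma> N = (1 - P_lost off (nat \<lfloor>t\<rfloor>) \<sigma>) * gammaV (a_par off t \<sigma> N)"
proof -
  define p where "p = P_lost off (nat \<lfloor>t\<rfloor>) \<sigma>"
  have p: "0 \<le> p" "p \<le> 1" using P_lost_bounds p_def by auto
  show "ExpX off t \<sigma> N = (1 - P_lost off (nat \<lfloor>t\<rfloor>) \<sigma>) * gamma1 (a_par off t \<sigma> N)"
  proof (cases "p = 1")
    case True
    then show ?thesis unfolding ExpX_def p_def[symmetric] by simp
  next
    case False
    then have "a_par off t \<sigma> N > 0" using p assms unfolding a_par_def p_def[symmetric] by simp
    then show ?thesis unfolding ExpX_def by (simp add: gamma1_eq)
  qed
  show "ExpXX off t \<sigma> N = (1 - P_lost off (nat \<lfloor>t\<rfloor>) \<sigma>) * gammaV (a_par off t \<sigma> N)"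
  proof (cases "p = 1")
    case True
    then show ?thesis unfolding ExpXX_def p_def[symmetric] by simp
  next
    case False
    then have "a_par off t \<sigma> N > 0" using p assms unfolding a_par_def p_def[symmetric] by simp
    then show ?thesis unfolding ExpXX_def by (simp add: gammaV_eq)
  qed
qed

lemma unif_int:
  fixes h :: "real \<Rightarrow> real"
  assumes tau: "\<tau> > 0" and hm: "h \<in> borel_measurable borel"
  shows "(\<integral>u. h (\<tau> - u) \<partial>(uniform_measure lborel {0<..\<tau>})) = (LINT t:{0..\<tau>}|lborel. h t) / \<tau>"
proof -
  have hm': "(\<lambda>u. h (\<tau> - u)) \<in> borel_measurable lborel"
    using hm by measurable
  have dens: "uniform_measure lborel {0<..\<tau>} = density lborel (\<lambda>x. ennreal (indicator {0<..\<tau>} x / \<tau>))"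
  proof -
    have i: "1 / ennreal \<tau> = ennreal (1 / \<tau>)" using divide_ennreal[of 1 \<tau>] tau by simp
    show ?thesis unfolding uniform_measure_def using tau i
    by (intro arg_cong[where f="density lborel"]) (auto simp: fun_eq_iff indicator_def divide_ennreal)
  qed
  have "(\<integral>u. h (\<tau> - u) \<partial>(uniform_measure lborel {0<..\<tau>})) = (\<integral>u. (indicator {0<..\<tau>} u / \<tau>) *\<^sub>R h (\<tau> - u) \<partial>lborel)"
    unfolding dens by (rule integral_density) (use hm' tau in auto)
  also have "\<dots> = (\<integral>u. indicator {0<..\<tau>} u * h (\<tau> - u) \<partial>lborel) / \<tau>"
    by (simp add: divide_inverse mult.commute mult.left_commute)
  also have "(\<integral>u. indicator {0<..\<tau>} u * h (\<tau> - u) \<partial>lborel) = (\<integral>t. indicator {0..<\<tau>} t * h t \<partial>lborel)"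
  proof -
    have "(\<integral>t. indicator {0..<\<tau>} t * h t \<partial>lborel) = \<bar>-1\<bar> *\<^sub>R (\<integral>u. indicator {0..<\<tau>} (\<tau> + (-1) * u) * h (\<tau> + (-1) * u) \<partial>lborel)"
      by (rule lborel_integral_real_affine) simp
    also have "\<dots> = (\<integral>u. indicator {0<..\<tau>} u * h (\<tau> - u) \<partial>lborel)"
      by (auto intro!: Bochner_Integration.integral_cong simp: indicator_def)
    finally show ?thesis by simp
  qed
  also have "(\<integral>t. indicator {0..<\<tau>} t * h t \<partial>lborel) = (LINT t:{0..\<tau>}|lborel. h t)"
    unfolding set_lebesgue_integral_def
    by (rule integral_cong_AE) (use hm AE_lborel_singleton[of \<tau>] in \<open>auto simp: indicator_def elim!: eventually_mono\<close>)
  finally show ?thesis .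
qed

lemma poi_mean: "(\<lambda>n. real n * Poi m n) sums m"
proof -
  have "(\<lambda>n. m * exp (-m) * (m^n /\<^sub>R fact n)) sums (m * exp (-m) * exp m)"
    by (rule sums_mult[OF exp_converges])
  then have "(\<lambda>n. real (Suc n) * Poi m (Suc n)) sums m"
    by (simp add: Poi_def exp_minus field_simps del: of_nat_Suc)
  then show ?thesis by (subst (asm) sums_Suc_iff) simp
qed

lemma main_gen:
  fixes w f :: "real \<Rightarrow> real" and E H :: "real \<Rightarrow> real \<Rightarrow> real" and \<Theta> \<tau> :: real
  assumes tau: "\<tau> \<ge> 0" and EH: "\<And>t \<alpha>. E t \<alpha> = H t \<alpha>"
    and Hm: "\<And>\<alpha>. (\<lambda>t. H t \<alpha>) \<in> borel_measurable borel"
  shows "(\<Sum>n. Poi (\<Theta> * \<tau>) n * (\<Sum>i\<in>{1..n}.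
      (LINT \<alpha>:{0<..}|lborel. w \<alpha> * (\<integral>u. E (\<tau> - u) \<alpha> \<partial>(uniform_measure lborel {0<..\<tau>})) * f \<alpha>)))
    = \<Theta> * (LINT \<alpha>:{0<..}|lborel. w \<alpha> * f \<alpha> * (LINT t:{0..\<tau>}|lborel. H t \<alpha>))"
proof -
  define C where "C = (LINT \<alpha>:{0<..}|lborel. w \<alpha> * (\<integral>u. E (\<tau> - u) \<alpha> \<partial>(uniform_measure lborel {0<..\<tau>})) * f \<alpha>)"
  have lhs: "(\<Sum>n. Poi (\<Theta> * \<tau>) n * (\<Sum>i\<in>{1..n}. C)) = \<Theta> * \<tau> * C"
  proof -
    have "(\<lambda>n. real n * Poi (\<Theta> * \<tau>) n * C) sums (\<Theta> * \<tau> * C)"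
      by (rule sums_mult2[OF poi_mean])
    moreover have "(\<lambda>n. Poi (\<Theta> * \<tau>) n * (\<Sum>i\<in>{1..n}. C)) = (\<lambda>n. real n * Poi (\<Theta> * \<tau>) n * C)"
      by (simp add: fun_eq_iff)
    ultimately show ?thesis by (simp add: sums_iff)
  qed
  show ?thesis
  proof (cases "\<tau> = 0")
    case True
    have z: "(LINT t:{0..\<tau>}|lborel. H t \<alpha>) = 0" for \<alpha>
    proof -
      have "(LINT t:{0..\<tau>}|lborel. H t \<alpha>) = (LINT t::real|lborel. 0::real)"
        unfolding set_lebesgue_integral_def
      proof (rule integral_cong_AE)
        show "(\<lambda>x. indicator {0..\<tau>} x *\<^sub>R H x \<alpha>) \<in> borel_measurable lborel"
          using Hm[of \<alpha>] by simp
        show "AE x in lborel. indicator {0..\<tau>} x *\<^sub>R H x \<alpha> = (0::real)"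
          by (rule eventually_mono[OF AE_lborel_singleton[of 0]]) (simp add: True indicator_def)
      qed simp
      then show ?thesis by simp
    qed
    show ?thesis using lhs True unfolding C_def[symmetric] z by simp
  next
    case False
    then have tp: "\<tau> > 0" using tau by simp
    have "\<tau> * C = (LINT \<alpha>:{0<..}|lborel. \<tau> * (w \<alpha> * (\<integral>u. E (\<tau> - u) \<alpha> \<partial>(uniform_measure lborel {0<..\<tau>})) * f \<alpha>))"
      unfolding C_def by simp
    also have "\<dots> = (LINT \<alpha>:{0<..}|lborel. w \<alpha> * f \<alpha> * (LINT t:{0..\<tau>}|lborel. H t \<alpha>))"
    proof (rule set_lebesgue_integral_cong)
      show "\<forall>x. x \<in> {0<..} \<longrightarrow> \<tau> * (w x * (\<integral>u. E (\<tau> - u) x \<partial>(uniform_measure lborel {0<..\<tau>})) * f x) = w x * f x * (LINT t:{0..\<tau>}|lborel. H t x)"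
        using tp unif_int[OF tp Hm] by (simp add: EH)
    qed simp
    finally show ?thesis using lhs unfolding C_def[symmetric] by (simp add: mult.assoc)
  qed
qed

theorem mainTheorem1:
  fixes off :: "real \<Rightarrow> nat pmf" and f :: "real \<Rightarrow> real"
    and s \<Theta> \<tau> :: real and N :: nat
  assumes N: "N \<ge> 1"
    and s: "s > 0" and Theta: "\<Theta> > 0" and tau: "\<tau> \<ge> 0"
    and off_mean: "\<And>\<sigma>. \<sigma> > 1 \<Longrightarrow> integrable (measure_pmf (off \<sigma>)) real
                         \<and> measure_pmf.expectation (off \<sigma>) real = \<sigma>"
    and off_meas: "\<And>k. (\<lambda>\<sigma>. pmf (off \<sigma>) k) \<in> borel_measurable borel"
    and f_meas: "f \<in> borel_measurable borel"
    and f_nonneg: "\<And>\<alpha>. \<alpha> > 0 \<Longrightarrow> f \<alpha> \<ge> 0"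
    and f_prob: "(LINT \<alpha>:{0<..}|lborel. f \<alpha>) = 1"
    and f_moments: "\<And>k::nat. set_integrable lborel {0<..} (\<lambda>\<alpha>. \<alpha> ^ k * f \<alpha>)"
  shows "Gbar off f s (real N) \<Theta> \<tau> =
           \<Theta> * (LINT \<alpha>:{0<..}|lborel. \<alpha> * f \<alpha> *
              (LINT t:{0..\<tau>}|lborel. (1 - P_lost off (nat \<lfloor>t\<rfloor>) (exp (s * \<alpha>)))
                   * gamma1 (a_par off t (exp (s * \<alpha>)) (real N))))
       \<and> VG off f s (real N) \<Theta> \<tau> =
           \<Theta> * (LINT \<alpha>:{0<..}|lborel. \<alpha>^2 * f \<alpha> *
              (LINT t:{0..\<tau>}|lborel. (1 - P_lost off (nat \<lfloor>t\<rfloor>) (exp (s * \<alpha>)))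
                   * gammaV (a_par off t (exp (s * \<alpha>)) (real N))))"
  proof -
  have Np: "real N \<ge> 1" using N by simp
  have ep: "exp (s * \<alpha>) > 0" for \<alpha> by simp
  show ?thesis
  proof
    show "Gbar off f s (real N) \<Theta> \<tau> =
           \<Theta> * (LINT \<alpha>:{0<..}|lborel. \<alpha> * f \<alpha> *
              (LINT t:{0..\<tau>}|lborel. (1 - P_lost off (nat \<lfloor>t\<rfloor>) (exp (s * \<alpha>)))
                   * gamma1 (a_par off t (exp (s * \<alpha>)) (real N))))"
      unfolding Gbar_def
      by (rule main_gen[where w="\<lambda>\<alpha>. \<alpha>" and E="\<lambda>t \<alpha>. ExpX off t (exp (s * \<alpha>)) (real N)", OF tau])
         (auto intro: ExpX_eq(1)[OF ep Np] H_meas(1))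
    show "VG off f s (real N) \<Theta> \<tau> =
           \<Theta> * (LINT \<alpha>:{0<..}|lborel. \<alpha>^2 * f \<alpha> *
              (LINT t:{0..\<tau>}|lborel. (1 - P_lost off (nat \<lfloor>t\<rfloor>) (exp (s * \<alpha>)))
                   * gammaV (a_par off t (exp (s * \<alpha>)) (real N))))"
      unfolding VG_def
      by (rule main_gen[where w="\<lambda>\<alpha>. \<alpha>^2" and E="\<lambda>t \<alpha>. ExpXX off t (exp (s * \<alpha>)) (real N)", OF tau])
         (auto intro: ExpX_eq(2)[OF ep Np] H_meas(2))
  qed
qed

end
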